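(* Let $f:\mathfrak g\to\mathfrak g$ be Ad-covariant ($f(gXg^{-1})=gf(X)g^{-1}$). Let $T(t)\in\mathbf T_{m+1}$ be a smooth curve with $1-\alpha b_k\neq0$, put $\mathcal F_-=I+\alpha\mathcal E$, $\mathcal L=\mathcal F_--\alpha T$, $\mathcal T_1=\mathcal L\mathcal F_-^{-1}$, $\mathcal T_2=\mathcal F_-^{-1}\mathcal L$, $\mathcal A_1=\mathcal F_-\,\pi_-\big(\mathcal F_-^{-1}f(\mathcal T_1)\big)$, $\mathcal A_2=\pi_-\big(f(\mathcal T_2)\mathcal F_-^{-1}\big)\mathcal F_-$, and suppose $\dot{\mathcal T}_1=[\mathcal A_1,\mathcal T_1]$. Write $P_0(\mathcal A_1)=\mathrm{diag}(\mathbf a_1,\dots,\mathbf a_N)$, $P_0(\mathcal A_2)=\mathrm{diag}(\mathbf a'_1,\dots,\mathbf a'_N)$. Then $\mathbf a'_k=\mathbf a_{k+1}$ and there is $C$ independent of $k$ such that $\mathbf a_k=C+\sum_{j=1}^{k-1}\frac{\alpha\dot b_j}{1-\alpha b_j}$, $\mathbf a'_k=C+\sum_{j=1}^{k}\frac{\alpha\dot b_j}{1-\alpha b_j}$.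
   Context: Periodic lattice setting: $N\ge2$, $m\ge1$; $\mathfrak g=\{X(\lambda)\in gl(N)[\lambda,\lambda^{-1}]:\Omega X(\lambda)\Omega^{-1}=X(\omega\lambda)\}$, $\omega=e^{2\pi i/N}$, $\Omega=\mathrm{diag}(1,\omega,\dots,\omega^{N-1})$, matrix indices and subscripts modulo $N$; $\mathfrak g_p=\{\lambda^p\sum_{j-k\equiv p}x_{jk}E_{jk}\}$, $P_0$ projection onto $\mathfrak g_0$, $\pi_-$ projection onto $\oplus_{p<0}\mathfrak g_p$, $\pi_+$ onto $\oplus_{p\ge0}\mathfrak g_p$. $\alpha\ne0$ real; $\mathcal E=\lambda\sum_kE_{k+1,k}$; $\mathcal F_-^{-1}$ a formal power series in $\lambda$ (algebra tacitly completed). $\mathbf T_{m+1}$ = set of $T=\mathcal E+\sum_kb_kE_{kk}+\sum_{j=1}^m\lambda^{-j}\sum_ka_k^{(j)}E_{k,k+j}$. *)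

theory Defs
  imports "HOL-Analysis.Analysis"
begin

text \<open>Elements of the (completed) twisted loop algebra: X p j k is the (j,k) entry
  (indices 0..N-1, representing indices mod N) of the coefficient of lambda^p.\<close>
type_synonym lmat = "int \<Rightarrow> nat \<Rightarrow> nat \<Rightarrow> complex"

definition loop_alg :: "nat \<Rightarrow> lmat set" where
  "loop_alg N = {X. (\<forall>p j k. (N \<le> j \<or> N \<le> k) \<longrightarrow> X p j k = 0)
      \<and> (\<forall>p j k. X p j k \<noteq> 0 \<longrightarrow> (int j - int k - p) mod int N = 0)
      \<and> (\<exists>p0. \<forall>p<p0. \<forall>j k. X p j k = 0)}"

text \<open>Product of formal Laurent series (Cauchy product; finite sums for series
  bounded below).\<close>
definition lmul :: "nat \<Rightarrow> lmat \<Rightarrow> lmat \<Rightarrow> lmat" where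
  "lmul N X Y = (\<lambda>p j k. \<Sum>q\<in>{q. (\<exists>a b. X q a b \<noteq> 0) \<and> (\<exists>a b. Y (p - q) a b \<noteq> 0)}.
        \<Sum>l<N. X q j l * Y (p - q) l k)"

definition lone :: "nat \<Rightarrow> lmat" where
  "lone N = (\<lambda>p j k. if p = 0 \<and> j = k \<and> j < N then 1 else 0)"

definition ladd :: "lmat \<Rightarrow> lmat \<Rightarrow> lmat" where
  "ladd X Y = (\<lambda>p j k. X p j k + Y p j k)"

definition lsub :: "lmat \<Rightarrow> lmat \<Rightarrow> lmat" where
  "lsub X Y = (\<lambda>p j k. X p j k - Y p j k)"

definition lsmul :: "real \<Rightarrow> lmat \<Rightarrow> lmat" where
  "lsmul c X = (\<lambda>p j k. complex_of_real c * X p j k)"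

definition lbr :: "nat \<Rightarrow> lmat \<Rightarrow> lmat \<Rightarrow> lmat" where
  "lbr N X Y = lsub (lmul N X Y) (lmul N Y X)"

definition pi_minus :: "lmat \<Rightarrow> lmat" where
  "pi_minus X = (\<lambda>p j k. if p < 0 then X p j k else 0)"

definition P0 :: "lmat \<Rightarrow> lmat" where
  "P0 X = (\<lambda>p j k. if p = 0 then X p j k else 0)"

definition calE :: "nat \<Rightarrow> lmat" where
  "calE N = (\<lambda>p j k. if p = 1 \<and> j < N \<and> k < N \<and> j = Suc k mod N then 1 else 0)"

definition Fminus :: "nat \<Rightarrow> real \<Rightarrow> lmat" where
  "Fminus N \<alpha> = ladd (lone N) (lsmul \<alpha> (calE N))"

text \<open>F_-^{-1} = sum_{n>=0} (-alpha calE)^n, the formal power series in lambda;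
  (calE^n has entries 1 at ((k+n) mod N, k) in the coefficient of lambda^n).\<close>
definition Finv :: "nat \<Rightarrow> real \<Rightarrow> lmat" where
  "Finv N \<alpha> = (\<lambda>p j k. if 0 \<le> p \<and> j < N \<and> k < N \<and> j = (k + nat p) mod N
       then complex_of_real ((- \<alpha>) ^ nat p) else 0)"

text \<open>The element T = calE + sum_k b_k E_kk + sum_{j=1}^m lambda^{-j} sum_k a^{(j)}_k E_{k,k+j}
  of T_{m+1}; b k = b_k, a j k = a^{(j)}_k for representatives k < N.\<close>
definition Tmat :: "nat \<Rightarrow> nat \<Rightarrow> (nat \<Rightarrow> complex) \<Rightarrow> (nat \<Rightarrow> nat \<Rightarrow> complex) \<Rightarrow> lmat" where
  "Tmat N m b a = (\<lambda>p i k. if i < N \<and> k < N then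
      (if p = 1 then (if i = Suc k mod N then 1 else 0)
       else if p = 0 then (if i = k then b i else 0)
       else if - int m \<le> p \<and> p < 0 then (if k = (i + nat (- p)) mod N then a (nat (- p)) i else 0)
       else 0)
     else 0)"

definition calL :: "nat \<Rightarrow> nat \<Rightarrow> real \<Rightarrow> (nat \<Rightarrow> complex) \<Rightarrow> (nat \<Rightarrow> nat \<Rightarrow> complex) \<Rightarrow> lmat" where
  "calL N m \<alpha> b a = lsub (Fminus N \<alpha>) (lsmul \<alpha> (Tmat N m b a))"

definition ad_covariant :: "nat \<Rightarrow> (lmat \<Rightarrow> lmat) \<Rightarrow> bool" where
  "ad_covariant N f \<longleftrightarrow> (\<forall>X\<in>loop_alg N. f X \<in> loop_alg N) \<and>
     (\<forall>X g h. X \<in> loop_alg N \<longrightarrow> g \<in> loop_alg N \<longrightarrow> h \<in> loop_alg N \<longrightarrow>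
        lmul N g h = lone N \<longrightarrow> lmul N h g = lone N \<longrightarrow>
        f (lmul N (lmul N g X) h) = lmul N (lmul N g (f X)) h)"

definition smooth_curve :: "(real \<Rightarrow> complex) \<Rightarrow> bool" where
  "smooth_curve g \<longleftrightarrow> (\<forall>n t. (((\<lambda>h s. vector_derivative h (at s)) ^^ n) g) differentiable (at t))"

end

theory Submission
  imports Defs
begin


definition lbb :: "lmat \<Rightarrow> int \<Rightarrow> bool" where "lbb X a \<longleftrightarrow> (\<forall>p<a. \<forall>j k. X p j k = 0)"
definition lub :: "lmat \<Rightarrow> int \<Rightarrow> bool" where "lub X u \<longleftrightarrow> (\<forall>p>u. \<forall>j k. X p j k = 0)"

lemma lmul_sum_I:
  assumes "finite I" and "\<And>q. q \<notin> I \<Longrightarrow> (\<forall>a b. X q a b = 0) \<or> (\<forall>a b. Y (p-q) a b = 0)"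
  shows "lmul N X Y p j k = (\<Sum>q\<in>I. \<Sum>l<N. X q j l * Y (p-q) l k)"
proof -
  let ?S = "{q. (\<exists>a b. X q a b \<noteq> 0) \<and> (\<exists>a b. Y (p - q) a b \<noteq> 0)}"
  have sub: "?S \<subseteq> I" using assms(2) by blast
  have "lmul N X Y p j k = (\<Sum>q\<in>?S. \<Sum>l<N. X q j l * Y (p-q) l k)" by (simp add: lmul_def)
  also have "\<dots> = (\<Sum>q\<in>I. \<Sum>l<N. X q j l * Y (p-q) l k)"
    by (rule sum.mono_neutral_left[OF assms(1) sub]) (intro ballI sum.neutral; auto)
  finally show ?thesis .
qed

lemma lmul_lbb: assumes "lbb X a" "lbb Y b" shows "lbb (lmul N X Y) (a+b)"
  unfolding lbb_def
proof (intro allI impI)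
  fix p j k assume p: "p < a + b"
  have "lmul N X Y p j k = (\<Sum>q\<in>{}. \<Sum>l<N. X q j l * Y (p-q) l k)"
  proof (rule lmul_sum_I)
    fix q
    show "(\<forall>aa ba. X q aa ba = 0) \<or> (\<forall>a b. Y (p - q) a b = 0)"
      using assms p unfolding lbb_def by (cases "q < a") auto
  qed auto
  then show "lmul N X Y p j k = 0" by simp
qed

lemma lmul_lub: assumes "lub X a" "lub Y b" shows "lub (lmul N X Y) (a+b)"
  unfolding lub_def
proof (intro allI impI)
  fix p j k assume p: "p > a + b"
  have "lmul N X Y p j k = (\<Sum>q\<in>{}. \<Sum>l<N. X q j l * Y (p-q) l k)"
  proof (rule lmul_sum_I)
    fix q
    show "(\<forall>aa ba. X q aa ba = 0) \<or> (\<forall>a b. Y (p - q) a b = 0)"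
      using assms p unfolding lub_def by (cases "q > a") auto
  qed auto
  then show "lmul N X Y p j k = 0" by simp
qed

lemma lmul_assoc:
  assumes X: "lbb X a" and Y: "lbb Y b" and Z: "lbb Z c"
  shows "lmul N (lmul N X Y) Z = lmul N X (lmul N Y Z)"
proof (intro ext)
  fix p j k
  define IQ where "IQ = {a+b..p-c}"
  define IR where "IR = {a..p-b-c}"
  have XY: "lbb (lmul N X Y) (a+b)" and YZ: "lbb (lmul N Y Z) (b+c)" using lmul_lbb assms by blast+
  have "lmul N (lmul N X Y) Z p j k = (\<Sum>q\<in>IQ. \<Sum>l<N. lmul N X Y q j l * Z (p-q) l k)"
  proof (rule lmul_sum_I)
    fix q assume "q \<notin> IQ"
    then show "(\<forall>aa b. lmul N X Y q aa b = 0) \<or> (\<forall>a b. Z (p - q) a b = 0)"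
      using XY Z by (auto simp: IQ_def lbb_def)
  qed (simp add: IQ_def)
  also have "\<dots> = (\<Sum>q\<in>IQ. \<Sum>l<N. (\<Sum>r\<in>IR. \<Sum>m<N. X r j m * Y (q-r) m l) * Z (p-q) l k)"
  proof (intro sum.cong refl)
    fix q l assume q: "q \<in> IQ"
    have "lmul N X Y q j l = (\<Sum>r\<in>IR. \<Sum>m<N. X r j m * Y (q-r) m l)"
    proof (rule lmul_sum_I)
      fix r assume "r \<notin> IR"
      then show "(\<forall>aa b. X r aa b = 0) \<or> (\<forall>a b. Y (q - r) a b = 0)"
        using X Y q by (auto simp: IQ_def IR_def lbb_def)
    qed (simp add: IR_def)
    then show "lmul N X Y q j l * Z (p - q) l k = (\<Sum>r\<in>IR. \<Sum>m<N. X r j m * Y (q - r) m l) * Z (p - q) l k" by simp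
  qed
  also have "\<dots> = (\<Sum>q\<in>IQ. \<Sum>l<N. \<Sum>r\<in>IR. \<Sum>m<N. X r j m * Y (q-r) m l * Z (p-q) l k)"
    by (simp add: sum_distrib_right)
  also have "\<dots> = (\<Sum>r\<in>IR. \<Sum>m<N. \<Sum>q\<in>IQ. \<Sum>l<N. X r j m * Y (q-r) m l * Z (p-q) l k)"
    (is "?A = _")
  proof -
    have "?A = (\<Sum>q\<in>IQ. \<Sum>r\<in>IR. \<Sum>l<N. \<Sum>m<N. X r j m * Y (q-r) m l * Z (p-q) l k)"
      by (rule sum.cong[OF refl], rule sum.swap)
    also have "\<dots> = (\<Sum>r\<in>IR. \<Sum>q\<in>IQ. \<Sum>l<N. \<Sum>m<N. X r j m * Y (q-r) m l * Z (p-q) l k)"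
      by (rule sum.swap)
    also have "\<dots> = (\<Sum>r\<in>IR. \<Sum>q\<in>IQ. \<Sum>m<N. \<Sum>l<N. X r j m * Y (q-r) m l * Z (p-q) l k)"
      by (rule sum.cong[OF refl], rule sum.cong[OF refl], rule sum.swap)
    also have "\<dots> = (\<Sum>r\<in>IR. \<Sum>m<N. \<Sum>q\<in>IQ. \<Sum>l<N. X r j m * Y (q-r) m l * Z (p-q) l k)"
      by (rule sum.cong[OF refl], rule sum.swap)
    finally show ?thesis .
  qed
  also have "\<dots> = (\<Sum>r\<in>IR. \<Sum>m<N. X r j m * (\<Sum>q\<in>IQ. \<Sum>l<N. Y (q-r) m l * Z (p-q) l k))"
    by (simp add: sum_distrib_left mult.assoc)
  also have "\<dots> = (\<Sum>r\<in>IR. \<Sum>m<N. X r j m * lmul N Y Z (p-r) m k)"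
  proof (intro sum.cong refl)
    fix r m assume r: "r \<in> IR"
    have "lmul N Y Z (p-r) m k = (\<Sum>s\<in>(\<lambda>q. q - r) ` IQ. \<Sum>l<N. Y s m l * Z (p-r-s) l k)"
    proof (rule lmul_sum_I)
      fix s assume s: "s \<notin> (\<lambda>q. q - r) ` IQ"
      have "s + r \<notin> IQ" using s by (metis add_diff_cancel_right' image_eqI)
      then show "(\<forall>a b. Y s a b = 0) \<or> (\<forall>a b. Z (p - r - s) a b = 0)"
        using Y Z r by (auto simp: IQ_def IR_def lbb_def)
    qed (simp add: IQ_def)
    also have "\<dots> = (\<Sum>q\<in>IQ. \<Sum>l<N. Y (q-r) m l * Z (p-q) l k)"
      by (subst sum.reindex) (auto simp: inj_on_def)
    finally show "X r j m * (\<Sum>q\<in>IQ. \<Sum>l<N. Y (q - r) m l * Z (p - q) l k) = X r j m * lmul N Y Z (p - r) m k" by simp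
  qed
  also have "\<dots> = lmul N X (lmul N Y Z) p j k"
  proof (rule lmul_sum_I[symmetric])
    fix r assume "r \<notin> IR"
    then show "(\<forall>aa b. X r aa b = 0) \<or> (\<forall>a b. lmul N Y Z (p - r) a b = 0)"
      using X YZ by (auto simp: IR_def lbb_def)
  qed (simp add: IR_def)
  finally show "lmul N (lmul N X Y) Z p j k = lmul N X (lmul N Y Z) p j k" .
qed


lemma Fm_0: "Fminus N \<alpha> 0 l k = (if l = k \<and> l < N then 1 else 0)"
  by (simp add: Fminus_def ladd_def lone_def lsmul_def calE_def)
lemma Fm_1: "Fminus N \<alpha> 1 l k = (if l < N \<and> k < N \<and> l = Suc k mod N then complex_of_real \<alpha> else 0)"
  by (simp add: Fminus_def ladd_def lone_def lsmul_def calE_def)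
lemma Fm_other: "q \<noteq> 0 \<Longrightarrow> q \<noteq> 1 \<Longrightarrow> Fminus N \<alpha> q l k = 0"
  by (simp add: Fminus_def ladd_def lone_def lsmul_def calE_def)

lemma suc_mod_iff:
  assumes "j < N" "l < N"
  shows "(j = Suc l mod N) \<longleftrightarrow> (l = (j + N - 1) mod N)"
proof -
  have A: "Suc l mod N = (if Suc l = N then 0 else Suc l)"
    using assms by (cases "Suc l = N") auto
  have B: "(j + N - 1) mod N = (if j = 0 then N - 1 else j - 1)"
  proof (cases "j = 0")
    case True then show ?thesis using assms by simp
  next
    case False
    then have e: "j + N - 1 = (j - 1) + N" by simp
    have "((j - 1) + N) mod N = j - 1" using assms by simp
    then show ?thesis using False e by simp
  qed
  show ?thesis unfolding A B using assms by auto
qed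

lemma lmul_Fm_right:
  assumes "0 < N"
  shows "lmul N X (Fminus N \<alpha>) p j k = (if k < N then X p j k + complex_of_real \<alpha> * X (p-1) j (Suc k mod N) else 0)"
proof -
  have "lmul N X (Fminus N \<alpha>) p j k = (\<Sum>q\<in>{p, p-1}. \<Sum>l<N. X q j l * Fminus N \<alpha> (p-q) l k)"
    by (rule lmul_sum_I) (auto intro!: Fm_other)
  also have "\<dots> = (\<Sum>l<N. X p j l * Fminus N \<alpha> 0 l k) + (\<Sum>l<N. X (p-1) j l * Fminus N \<alpha> 1 l k)"
    by simp
  also have "(\<Sum>l<N. X p j l * Fminus N \<alpha> 0 l k) = (if k < N then X p j k else 0)"
    by (simp add: Fm_0 if_distrib[of "\<lambda>x. _ * x"] sum.delta cong: if_cong)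
  also have "(\<Sum>l<N. X (p-1) j l * Fminus N \<alpha> 1 l k) = (if k < N then complex_of_real \<alpha> * X (p-1) j (Suc k mod N) else 0)"
    using assms by (simp add: Fm_1 if_distrib[of "\<lambda>x. _ * x"] sum.delta cong: if_cong)
  finally show ?thesis by simp
qed

lemma lmul_Fm_left:
  assumes "0 < N"
  shows "lmul N (Fminus N \<alpha>) X p j k = (if j < N then X p j k + complex_of_real \<alpha> * X (p-1) ((j + N - 1) mod N) k else 0)"
proof -
  have "lmul N (Fminus N \<alpha>) X p j k = (\<Sum>q\<in>{0, 1}. \<Sum>l<N. Fminus N \<alpha> q j l * X (p-q) l k)"
    by (rule lmul_sum_I) (auto intro!: Fm_other)
  also have "\<dots> = (\<Sum>l<N. Fminus N \<alpha> 0 j l * X p l k) + (\<Sum>l<N. Fminus N \<alpha> 1 j l * X (p-1) l k)"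
    by simp
  also have "(\<Sum>l<N. Fminus N \<alpha> 0 j l * X p l k) = (if j < N then X p j k else 0)"
    by (simp add: Fm_0 if_distrib[of "\<lambda>x. x * _"] sum.delta cong: if_cong)
  also have "(\<Sum>l<N. Fminus N \<alpha> 1 j l * X (p-1) l k) = (\<Sum>l<N. if l = (j + N - 1) mod N then (if j < N then complex_of_real \<alpha> * X (p-1) l k else 0) else 0)"
    by (rule sum.cong[OF refl]) (auto simp: Fm_1 suc_mod_iff)
  also have "\<dots> = (if j < N then complex_of_real \<alpha> * X (p-1) ((j + N - 1) mod N) k else 0)"
    using assms by (simp add: sum.delta)
  finally show ?thesis by simp
qed


lemma Fi_Fm: assumes "0 < N" shows "lmul N (Finv N \<alpha>) (Fminus N \<alpha>) = lone N"
proof (intro ext)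
  fix p j k
  show "lmul N (Finv N \<alpha>) (Fminus N \<alpha>) p j k = lone N p j k"
  proof (cases "k < N")
    case False then show ?thesis using assms by (simp add: lmul_Fm_right lone_def)
  next
    case kN: True
    show ?thesis
    proof (cases "p \<le> 0")
      case True
      have "Finv N \<alpha> (p-1) j (Suc k mod N) = 0" using True by (simp add: Finv_def)
      moreover have "Finv N \<alpha> p j k = lone N p j k" using True kN by (auto simp: Finv_def lone_def)
      ultimately show ?thesis using assms kN by (simp add: lmul_Fm_right)
    next
      case False
      define n where "n = nat p - 1"
      have pn: "nat p = Suc n" "nat (p-1) = n" "0 \<le> p" "0 \<le> p - 1" "p \<noteq> 0" using False unfolding n_def by auto
      have e: "(Suc k mod N + n) mod N = (k + Suc n) mod N" by (simp add: mod_add_left_eq)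
      have f1: "Finv N \<alpha> p j k = (if j < N \<and> j = (k + Suc n) mod N then complex_of_real ((-\<alpha>) ^ Suc n) else 0)"
        using kN pn by (simp only: Finv_def) simp
      have f2: "Finv N \<alpha> (p-1) j (Suc k mod N) = (if j < N \<and> j = (k + Suc n) mod N then complex_of_real ((-\<alpha>) ^ n) else 0)"
        using kN pn assms e by (simp only: Finv_def) simp
      have "lmul N (Finv N \<alpha>) (Fminus N \<alpha>) p j k = Finv N \<alpha> p j k + complex_of_real \<alpha> * Finv N \<alpha> (p-1) j (Suc k mod N)"
        using assms kN by (simp add: lmul_Fm_right)
      also have "\<dots> = 0" unfolding f1 f2 by simp
      finally show ?thesis using pn by (simp add: lone_def)
    qed
  qed
qed

lemma Fm_Fi: assumes "0 < N" shows "lmul N (Fminus N \<alpha>) (Finv N \<alpha>) = lone N"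
proof (intro ext)
  fix p j k
  show "lmul N (Fminus N \<alpha>) (Finv N \<alpha>) p j k = lone N p j k"
  proof (cases "j < N")
    case False then show ?thesis using assms by (simp add: lmul_Fm_left lone_def)
  next
    case jN: True
    show ?thesis
    proof (cases "p \<le> 0")
      case True
      have "Finv N \<alpha> (p-1) ((j + N - 1) mod N) k = 0" using True by (simp add: Finv_def)
      moreover have "Finv N \<alpha> p j k = lone N p j k" using True jN by (auto simp: Finv_def lone_def)
      ultimately show ?thesis using assms jN by (simp add: lmul_Fm_left)
    next
      case False
      define n where "n = nat p - 1"
      have pn: "nat p = Suc n" "nat (p-1) = n" "0 \<le> p" "0 \<le> p - 1" "p \<noteq> 0" using False unfolding n_def by auto
      have e: "((k + n) mod N = (j + N - 1) mod N) \<longleftrightarrow> j = (k + Suc n) mod N"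
        using suc_mod_iff[of j N "(k + n) mod N"] assms jN by (simp add: mod_Suc_eq eq_commute)
      have f1: "Finv N \<alpha> p j k = (if k < N \<and> j = (k + Suc n) mod N then complex_of_real ((-\<alpha>) ^ Suc n) else 0)"
        using jN pn assms by (simp only: Finv_def) simp
      have f2a: "Finv N \<alpha> (p-1) ((j + N - 1) mod N) k = (if k < N \<and> (j + N - 1) mod N = (k + n) mod N then complex_of_real ((-\<alpha>) ^ n) else 0)"
        using jN pn assms by (simp only: Finv_def) simp
      have e': "((j + N - 1) mod N = (k + n) mod N) = (j = (k + Suc n) mod N)" using e by auto
      have f2: "Finv N \<alpha> (p-1) ((j + N - 1) mod N) k = (if k < N \<and> j = (k + Suc n) mod N then complex_of_real ((-\<alpha>) ^ n) else 0)"
        using f2a unfolding e' .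
      have "lmul N (Fminus N \<alpha>) (Finv N \<alpha>) p j k = Finv N \<alpha> p j k + complex_of_real \<alpha> * Finv N \<alpha> (p-1) ((j + N - 1) mod N) k"
        using assms jN by (simp add: lmul_Fm_left)
      also have "\<dots> = 0" unfolding f1 f2 by simp
      finally show ?thesis using pn by (simp add: lone_def)
    qed
  qed
qed

lemma lmul_lone_right:
  assumes "\<forall>p j k. N \<le> k \<longrightarrow> X p j k = 0"
  shows "lmul N X (lone N) = X"
proof (intro ext)
  fix p j k
  have "lmul N X (lone N) p j k = (\<Sum>q\<in>{p}. \<Sum>l<N. X q j l * lone N (p-q) l k)"
    by (rule lmul_sum_I) (auto simp: lone_def)
  also have "\<dots> = (\<Sum>l<N. X p j l * (if l = k \<and> l < N then 1 else 0))" by (simp add: lone_def)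
  also have "\<dots> = X p j k" using assms
    by (simp add: if_distrib[of "\<lambda>x. _ * x"] sum.delta cong: if_cong)
  finally show "lmul N X (lone N) p j k = X p j k" .
qed

lemma cong_modL: "(int x - int k - p) mod int N = 0 \<Longrightarrow> (int (x mod N) - int k - p) mod int N = 0"
  by (metis mod_diff_left_eq zmod_int)
lemma cong_modR: "(int j - int x - p) mod int N = 0 \<Longrightarrow> (int j - int (x mod N) - p) mod int N = 0"
  by (metis mod_diff_right_eq mod_diff_left_eq zmod_int diff_diff_eq add.commute)

lemma loop_alg_lbb: "X \<in> loop_alg N \<Longrightarrow> \<exists>a. lbb X a"
  by (auto simp: loop_alg_def lbb_def)

lemma loop_alg_lmul:
  assumes X: "X \<in> loop_alg N" and Y: "Y \<in> loop_alg N"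
  shows "lmul N X Y \<in> loop_alg N"
proof -
  obtain a where a: "lbb X a" using loop_alg_lbb[OF X] by blast
  obtain b where b: "lbb Y b" using loop_alg_lbb[OF Y] by blast
  have c1: "lmul N X Y p j k = 0" if "N \<le> j \<or> N \<le> k" for p j k
    unfolding lmul_def using X Y that by (auto simp: loop_alg_def intro!: sum.neutral)
  have c2: "(int j - int k - p) mod int N = 0" if nz: "lmul N X Y p j k \<noteq> 0" for p j k
  proof -
    obtain q where "(\<Sum>l<N. X q j l * Y (p-q) l k) \<noteq> 0"
      using nz unfolding lmul_def by (meson sum.not_neutral_contains_not_neutral)
    then obtain l where "X q j l * Y (p-q) l k \<noteq> 0"
      by (meson sum.not_neutral_contains_not_neutral)
    then have "(int j - int l - q) mod int N = 0" "(int l - int k - (p-q)) mod int N = 0"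
      using X Y unfolding loop_alg_def by auto
    then have "int N dvd (int j - int l - q)" "int N dvd (int l - int k - (p-q))" by auto
    then have "int N dvd ((int j - int l - q) + (int l - int k - (p-q)))" by (rule dvd_add)
    moreover have "(int j - int l - q) + (int l - int k - (p-q)) = int j - int k - p" by simp
    ultimately show ?thesis by (metis dvd_imp_mod_0)
  qed
  have c3: "lbb (lmul N X Y) (a+b)" by (rule lmul_lbb[OF a b])
  show ?thesis using c1 c2 c3 unfolding loop_alg_def lbb_def by blast
qed

lemma loop_alg_lsub:
  assumes "X \<in> loop_alg N" "Y \<in> loop_alg N" shows "lsub X Y \<in> loop_alg N"
proof -
  obtain a where a: "lbb X a" using loop_alg_lbb assms by blast
  obtain b where b: "lbb Y b" using loop_alg_lbb assms by blast
  have "lbb (lsub X Y) (min a b)" using a b by (auto simp: lbb_def lsub_def)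
  moreover have "(int j - int k - p) mod int N = 0" if "lsub X Y p j k \<noteq> 0" for p j k
  proof -
    have "X p j k \<noteq> 0 \<or> Y p j k \<noteq> 0" using that by (auto simp: lsub_def)
    then show ?thesis using assms unfolding loop_alg_def by blast
  qed
  moreover have "lsub X Y p j k = 0" if "N \<le> j \<or> N \<le> k" for p j k
    using assms that unfolding loop_alg_def lsub_def by auto
  ultimately show ?thesis unfolding loop_alg_def lbb_def by blast
qed

lemma loop_alg_lsmul:
  assumes "X \<in> loop_alg N" shows "lsmul c X \<in> loop_alg N"
proof -
  obtain a where a: "lbb X a" using loop_alg_lbb assms by blast
  then show ?thesis using assms unfolding loop_alg_def lsmul_def lbb_def by auto
qed

lemma loop_alg_Fm: "Fminus N \<alpha> \<in> loop_alg N"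
proof -
  have c: "(int (Suc k mod N) - int k - 1) mod int N = 0" for k
    by (rule cong_modL) simp
  have "Fminus N \<alpha> p j k = 0" if "N \<le> j \<or> N \<le> k" for p j k
    using that by (auto simp: Fminus_def ladd_def lone_def lsmul_def calE_def)
  moreover have "(int j - int k - p) mod int N = 0" if "Fminus N \<alpha> p j k \<noteq> 0" for p j k
  proof -
    have "p = 0 \<and> j = k \<or> p = 1 \<and> j = Suc k mod N"
      using that by (auto simp: Fminus_def ladd_def lone_def lsmul_def calE_def split: if_splits)
    then show ?thesis using c by auto
  qed
  moreover have "\<forall>p<0. \<forall>j k. Fminus N \<alpha> p j k = 0" by (simp add: Fm_other)
  ultimately show ?thesis unfolding loop_alg_def by blast
qed

lemma loop_alg_Fi: "Finv N \<alpha> \<in> loop_alg N"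
proof -
  have c: "(int ((k + nat p) mod N) - int k - p) mod int N = 0" if "0 \<le> p" for k p
    by (rule cong_modL) (use that in simp)
  have "Finv N \<alpha> p j k = 0" if "N \<le> j \<or> N \<le> k" for p j k
    unfolding Finv_def using that by (intro if_not_P) auto
  moreover have "(int j - int k - p) mod int N = 0" if "Finv N \<alpha> p j k \<noteq> 0" for p j k
  proof -
    have "0 \<le> p \<and> j = (k + nat p) mod N"
      using that by (auto simp: Finv_def split: if_splits)
    then show ?thesis using c by auto
  qed
  moreover have "\<forall>p<0. \<forall>j k. Finv N \<alpha> p j k = 0" by (simp add: Finv_def)
  ultimately show ?thesis unfolding loop_alg_def by blast
qed

lemma loop_alg_Tmat: "Tmat N m b a \<in> loop_alg N"
proof -
  have c1: "(int (Suc k mod N) - int k - 1) mod int N = 0" for k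
    by (rule cong_modL) simp
  have c2: "(int i - int ((i + nat (-p)) mod N) - p) mod int N = 0" if "p < 0" for i p
    by (rule cong_modR) (use that in simp)
  have "Tmat N m b a p j k = 0" if "N \<le> j \<or> N \<le> k" for p j k
    unfolding Tmat_def using that by (intro if_not_P) auto
  moreover have "(int j - int k - p) mod int N = 0" if "Tmat N m b a p j k \<noteq> 0" for p j k
  proof -
    have "p = 0 \<and> j = k \<or> p = 1 \<and> j = Suc k mod N \<or> p < 0 \<and> k = (j + nat (-p)) mod N"
    proof (rule ccontr)
      assume "\<not> ?thesis"
      then have "Tmat N m b a p j k = 0" unfolding Tmat_def by simp
      then show False using that by simp
    qed
    then show ?thesis using c1 c2 by auto
  qed
  moreover have "\<forall>p < - int m. \<forall>j k. Tmat N m b a p j k = 0" by (simp add: Tmat_def)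
  ultimately show ?thesis unfolding loop_alg_def by blast
qed

lemma loop_alg_calL: "calL N m \<alpha> b a \<in> loop_alg N"
  unfolding calL_def by (intro loop_alg_lsub loop_alg_lsmul loop_alg_Fm loop_alg_Tmat)



lemma lbb_mono: "lbb X a \<Longrightarrow> a' \<le> a \<Longrightarrow> lbb X a'"
  by (auto simp: lbb_def)

lemma lsub_lbb: "lbb X a \<Longrightarrow> lbb Y a \<Longrightarrow> lbb (lsub X Y) a"
  by (auto simp: lbb_def lsub_def)

lemma lmul_lsub_right:
  assumes X: "lbb X a" and Y: "lbb Y a" and Z: "lbb Z c"
  shows "lmul N (lsub X Y) Z = lsub (lmul N X Z) (lmul N Y Z)"
proof (intro ext)
  fix p j k
  define I where "I = {a..p-c}"
  have XY: "lbb (lsub X Y) a" using X Y by (rule lsub_lbb)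
  have e1: "lmul N W Z p j k = (\<Sum>q\<in>I. \<Sum>l<N. W q j l * Z (p-q) l k)" if W: "lbb W a" for W
  proof (rule lmul_sum_I)
    fix q assume "q \<notin> I"
    then show "(\<forall>aa b. W q aa b = 0) \<or> (\<forall>a b. Z (p - q) a b = 0)"
      using W Z by (auto simp: I_def lbb_def)
  qed (simp add: I_def)
  show "lmul N (lsub X Y) Z p j k = lsub (lmul N X Z) (lmul N Y Z) p j k"
  proof -
    have "lmul N (lsub X Y) Z p j k = (\<Sum>q\<in>I. \<Sum>l<N. lsub X Y q j l * Z (p-q) l k)" by (rule e1[OF XY])
    also have "\<dots> = lmul N X Z p j k - lmul N Y Z p j k"
      unfolding e1[OF X] e1[OF Y] by (simp add: lsub_def left_diff_distrib sum_subtractf)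
    finally show ?thesis by (simp add: lsub_def)
  qed
qed

lemma lub_Fm: "lub (Fminus N \<alpha>) 1"
  by (simp add: lub_def Fm_other)
lemma lbb_Fm: "lbb (Fminus N \<alpha>) 0"
  by (simp add: lbb_def Fm_other)
lemma lbb_Fi: "lbb (Finv N \<alpha>) 0"
  by (simp add: lbb_def Finv_def)
lemma lub_pi: "lub (pi_minus X) (-1)"
  by (simp add: lub_def pi_minus_def)
lemma lbb_pi: "lbb X a \<Longrightarrow> lbb (pi_minus X) a"
  by (simp add: lbb_def pi_minus_def)

lemma lmul_at0:
  assumes "lub X 0" "lub Y 0"
  shows "lmul N X Y 0 j k = (\<Sum>l<N. X 0 j l * Y 0 l k)"
proof -
  have "lmul N X Y 0 j k = (\<Sum>q\<in>{0}. \<Sum>l<N. X q j l * Y (0-q) l k)"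
  proof (rule lmul_sum_I)
    fix q :: int assume "q \<notin> {0}"
    then show "(\<forall>a b. X q a b = 0) \<or> (\<forall>a b. Y (0 - q) a b = 0)"
      using assms by (cases "q > 0") (auto simp: lub_def)
  qed simp
  then show ?thesis by simp
qed

lemma calL_lub: "lub (calL N m \<alpha> b a) 0"
  unfolding lub_def
proof (intro allI impI)
  fix p :: int and j k assume p: "p > 0"
  show "calL N m \<alpha> b a p j k = 0"
  proof (cases "p = 1")
    case True then show ?thesis
      by (simp add: calL_def lsub_def lsmul_def Tmat_def Fm_1)
  next
    case False then show ?thesis using p
      by (simp add: calL_def lsub_def lsmul_def Tmat_def Fm_other)
  qed
qed

lemma calL_0: "calL N m \<alpha> b a 0 j k = (if j = k \<and> j < N then 1 - complex_of_real \<alpha> * b j else 0)"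
  by (simp add: calL_def lsub_def lsmul_def Tmat_def Fm_0)

theorem mainTheorem12:
  fixes N m :: nat and \<alpha> :: real and f :: "lmat \<Rightarrow> lmat"
    and b :: "real \<Rightarrow> nat \<Rightarrow> complex" and a :: "real \<Rightarrow> nat \<Rightarrow> nat \<Rightarrow> complex"
  assumes "N \<ge> 2" and "m \<ge> 1" and "\<alpha> \<noteq> 0"
    and "ad_covariant N f"
    and "\<forall>k<N. smooth_curve (\<lambda>t. b t k)"
    and "\<forall>j\<in>{1..m}. \<forall>k<N. smooth_curve (\<lambda>t. a t j k)"
    and "\<forall>t. \<forall>k<N. 1 - complex_of_real \<alpha> * b t k \<noteq> 0"
  defines "T1 \<equiv> \<lambda>t. lmul N (calL N m \<alpha> (b t) (a t)) (Finv N \<alpha>)"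
    and "T2 \<equiv> \<lambda>t. lmul N (Finv N \<alpha>) (calL N m \<alpha> (b t) (a t))"
    and "A1 \<equiv> \<lambda>t. lmul N (Fminus N \<alpha>) (pi_minus (lmul N (Finv N \<alpha>) (f (lmul N (calL N m \<alpha> (b t) (a t)) (Finv N \<alpha>)))))"
    and "A2 \<equiv> \<lambda>t. lmul N (pi_minus (lmul N (f (lmul N (Finv N \<alpha>) (calL N m \<alpha> (b t) (a t)))) (Finv N \<alpha>))) (Fminus N \<alpha>)"
  assumes "\<forall>t p i k. ((\<lambda>s. T1 s p i k) has_vector_derivative (lbr N (A1 t) (T1 t) p i k)) (at t)"
  shows "\<forall>t. (\<forall>k\<in>{1..N}. P0 (A2 t) 0 (k mod N) (k mod N) = P0 (A1 t) 0 (Suc k mod N) (Suc k mod N))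
     \<and> (\<exists>C. \<forall>k\<in>{1..N}.
          P0 (A1 t) 0 (k mod N) (k mod N) = C + (\<Sum>j=1..k-1. complex_of_real \<alpha> * vector_derivative (\<lambda>s. b s (j mod N)) (at t) / (1 - complex_of_real \<alpha> * b t (j mod N)))
        \<and> P0 (A2 t) 0 (k mod N) (k mod N) = C + (\<Sum>j=1..k. complex_of_real \<alpha> * vector_derivative (\<lambda>s. b s (j mod N)) (at t) / (1 - complex_of_real \<alpha> * b t (j mod N))))"
proof (intro allI)
  fix t
  have deriv: "\<forall>t p i k. ((\<lambda>s. T1 s p i k) has_vector_derivative (lbr N (A1 t) (T1 t) p i k)) (at t)"
    by fact
  have N0: "0 < N" using assms(1) by simp
  have adc: "ad_covariant N f" by (rule assms(4))
  have al: "complex_of_real \<alpha> \<noteq> 0" using assms(3) by simp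
  define Fm where "Fm = Fminus N \<alpha>"
  define Fi where "Fi = Finv N \<alpha>"
  define L where "L = (\<lambda>s. calL N m \<alpha> (b s) (a s))"
  define Z where "Z = (\<lambda>s. f (T1 s))"
  define Y where "Y = (\<lambda>s. pi_minus (lmul N Fi (Z s)))"
  have T1e: "T1 s = lmul N (L s) Fi" for s by (simp add: T1_def L_def Fi_def)
  have FiFm: "lmul N Fi Fm = lone N" using Fi_Fm[OF N0] by (simp add: Fi_def Fm_def)
  have FmFi: "lmul N Fm Fi = lone N" using Fm_Fi[OF N0] by (simp add: Fi_def Fm_def)
  have Fmalg: "Fm \<in> loop_alg N" by (simp add: Fm_def loop_alg_Fm)
  have Fialg: "Fi \<in> loop_alg N" by (simp add: Fi_def loop_alg_Fi)
  have lbbFm: "lbb Fm 0" by (simp add: Fm_def lbb_Fm)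
  have lbbFi: "lbb Fi 0" by (simp add: Fi_def lbb_Fi)
  have lubFm: "lub Fm 1" by (simp add: Fm_def lub_Fm)
  have Lalg: "L s \<in> loop_alg N" for s by (simp add: L_def loop_alg_calL)
  have T1alg: "T1 s \<in> loop_alg N" for s unfolding T1e by (rule loop_alg_lmul[OF Lalg Fialg])
  have Zalg: "Z s \<in> loop_alg N" for s using adc T1alg unfolding ad_covariant_def Z_def by blast
  have FiZalg: "lmul N Fi (Z s) \<in> loop_alg N" for s by (rule loop_alg_lmul[OF Fialg Zalg])
  have zeroN: "\<forall>p j k. N \<le> k \<longrightarrow> X p j k = 0" if "X \<in> loop_alg N" for X
    using that by (auto simp: loop_alg_def)
  have L_eq: "lmul N (T1 s) Fm = L s" for s
  proof -
    obtain c where c: "lbb (L s) c" using loop_alg_lbb Lalg by blast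
    have "lmul N (T1 s) Fm = lmul N (L s) (lmul N Fi Fm)" unfolding T1e by (rule lmul_assoc[OF c lbbFi lbbFm])
    also have "\<dots> = L s" unfolding FiFm by (rule lmul_lone_right[OF zeroN[OF Lalg]])
    finally show ?thesis .
  qed
  have A1e: "A1 s = lmul N Fm (Y s)" for s by (simp add: A1_def Fm_def Fi_def Y_def Z_def T1_def)
  have A2e: "A2 s = lmul N (Y s) Fm" for s
  proof -
    obtain c where c: "lbb (L s) c" using loop_alg_lbb Lalg by blast
    obtain z where z: "lbb (Z s) z" using loop_alg_lbb Zalg by blast
    have T1lbb: "lbb (T1 s) (c + 0)" unfolding T1e by (rule lmul_lbb[OF c lbbFi])
    have "lmul N Fi (L s) = lmul N Fi (lmul N (T1 s) Fm)" using L_eq by simp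
    also have "\<dots> = lmul N (lmul N Fi (T1 s)) Fm" by (rule lmul_assoc[symmetric, OF lbbFi T1lbb lbbFm])
    finally have e1: "lmul N Fi (L s) = lmul N (lmul N Fi (T1 s)) Fm" .
    have "f (lmul N Fi (L s)) = lmul N (lmul N Fi (Z s)) Fm"
      using adc T1alg Fialg Fmalg FiFm FmFi unfolding e1 ad_covariant_def Z_def by blast
    then have "lmul N (f (lmul N Fi (L s))) Fi = lmul N (lmul N (lmul N Fi (Z s)) Fm) Fi" by simp
    also have "\<dots> = lmul N (lmul N Fi (Z s)) (lmul N Fm Fi)" by (rule lmul_assoc[OF lmul_lbb[OF lbbFi z] lbbFm lbbFi])
    also have "\<dots> = lmul N Fi (Z s)" unfolding FmFi by (rule lmul_lone_right[OF zeroN[OF FiZalg]])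
    finally show "A2 s = lmul N (Y s) Fm" by (simp add: A2_def Y_def Fm_def Fi_def L_def)
  qed
  define D where "D = lbr N (A1 t) (T1 t)"
  obtain c where c: "lbb (L t) c" using loop_alg_lbb Lalg by blast
  obtain z where z: "lbb (Z t) z" using loop_alg_lbb Zalg by blast
  have T1lbb: "lbb (T1 t) (c + 0)" unfolding T1e by (rule lmul_lbb[OF c lbbFi])
  have Ylbb: "lbb (Y t) (0 + z)" unfolding Y_def by (rule lbb_pi[OF lmul_lbb[OF lbbFi z]])
  have A1lbb: "lbb (A1 t) (0 + (0 + z))" unfolding A1e by (rule lmul_lbb[OF lbbFm Ylbb])
  have A2lbb: "lbb (A2 t) ((0 + z) + 0)" unfolding A2e by (rule lmul_lbb[OF Ylbb lbbFm])
  have lubY: "lub (Y t) (-1)" unfolding Y_def by (rule lub_pi)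
  have A1lub: "lub (A1 t) 0" using lmul_lub[OF lubFm lubY] unfolding A1e by simp
  have A2lub: "lub (A2 t) 0" using lmul_lub[OF lubY lubFm] unfolding A2e by simp
  have Llub: "lub (L t) 0" unfolding L_def by (rule calL_lub)
  have P1: "lbb (lmul N (A1 t) (T1 t)) ((0 + (0 + z)) + (c + 0))" by (rule lmul_lbb[OF A1lbb T1lbb])
  have P2: "lbb (lmul N (T1 t) (A1 t)) ((0 + (0 + z)) + (c + 0))"
    using lmul_lbb[OF T1lbb A1lbb] by (simp add: add.commute)
  have DFm: "lmul N D Fm = lsub (lmul N (A1 t) (L t)) (lmul N (L t) (A2 t))"
  proof -
    have "lmul N D Fm = lsub (lmul N (lmul N (A1 t) (T1 t)) Fm) (lmul N (lmul N (T1 t) (A1 t)) Fm)"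
      unfolding D_def lbr_def by (rule lmul_lsub_right[OF P1 P2 lbbFm])
    also have "lmul N (lmul N (A1 t) (T1 t)) Fm = lmul N (A1 t) (L t)"
      using lmul_assoc[OF A1lbb T1lbb lbbFm] L_eq by simp
    also have "lmul N (lmul N (T1 t) (A1 t)) Fm = lmul N (L t) (A2 t)"
    proof -
      have "lmul N (lmul N (T1 t) (A1 t)) Fm = lmul N (T1 t) (lmul N (A1 t) Fm)"
        by (rule lmul_assoc[OF T1lbb A1lbb lbbFm])
      also have "lmul N (A1 t) Fm = lmul N Fm (A2 t)"
        unfolding A1e A2e by (rule lmul_assoc[OF lbbFm Ylbb lbbFm])
      also have "lmul N (T1 t) (lmul N Fm (A2 t)) = lmul N (lmul N (T1 t) Fm) (A2 t)"
        by (rule lmul_assoc[symmetric, OF T1lbb lbbFm A2lbb])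
      finally show ?thesis using L_eq by simp
    qed
    finally show ?thesis .
  qed
  define d where "d = (\<lambda>i. complex_of_real \<alpha> * vector_derivative (\<lambda>s. b s i) (at t) / (1 - complex_of_real \<alpha> * b t i))"
  define aa where "aa = (\<lambda>i. A1 t 0 i i)"
  define ab where "ab = (\<lambda>i. A2 t 0 i i)"
  have Y0: "Y t 0 i k = 0" for i k by (simp add: Y_def pi_minus_def)
  have aa_form: "aa i = complex_of_real \<alpha> * Y t (-1) ((i + N - 1) mod N) i" if "i < N" for i
    using that N0 Y0 by (simp add: aa_def A1e Fm_def lmul_Fm_left)
  have ab_form: "ab i = complex_of_real \<alpha> * Y t (-1) i (Suc i mod N)" if "i < N" for i
    using that N0 Y0 by (simp add: ab_def A2e Fm_def lmul_Fm_right)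
  have shift: "ab i = aa (Suc i mod N)" if "i < N" for i
  proof -
    have "i = (Suc i mod N + N - 1) mod N"
      using suc_mod_iff[of "Suc i mod N" N i] that N0 by simp
    then show ?thesis using ab_form[OF that] aa_form[of "Suc i mod N"] N0 by simp
  qed
  have lax: "ab i = aa i + d i" if iN: "i < N" for i
  proof -
    have bform: "b s i = (1 - (T1 s 0 i i + complex_of_real \<alpha> * T1 s (-1) i (Suc i mod N))) / complex_of_real \<alpha>" for s
    proof -
      have "L s 0 i i = T1 s 0 i i + complex_of_real \<alpha> * T1 s (-1) i (Suc i mod N)"
        using L_eq[of s] iN N0 by (metis Fm_def diff_0 lmul_Fm_right)
      moreover have "L s 0 i i = 1 - complex_of_real \<alpha> * b s i" using iN by (simp add: L_def calL_0)
      ultimately show ?thesis using al by (simp add: field_simps)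
    qed
    have "((\<lambda>s. (1 - (T1 s 0 i i + complex_of_real \<alpha> * T1 s (-1) i (Suc i mod N))) / complex_of_real \<alpha>) has_vector_derivative
        ((0 - (D 0 i i + complex_of_real \<alpha> * D (-1) i (Suc i mod N))) / complex_of_real \<alpha>)) (at t)"
      using deriv unfolding D_def by (intro derivative_intros) auto
    moreover have "(\<lambda>s. b s i) = (\<lambda>s. (1 - (T1 s 0 i i + complex_of_real \<alpha> * T1 s (-1) i (Suc i mod N))) / complex_of_real \<alpha>)"
      using bform by (rule ext)
    ultimately have "((\<lambda>s. b s i) has_vector_derivative ((0 - (D 0 i i + complex_of_real \<alpha> * D (-1) i (Suc i mod N))) / complex_of_real \<alpha>)) (at t)"
      by simp
    then have vd: "vector_derivative (\<lambda>s. b s i) (at t) = (0 - (D 0 i i + complex_of_real \<alpha> * D (-1) i (Suc i mod N))) / complex_of_real \<alpha>"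
      by (rule vector_derivative_at)
    have "D 0 i i + complex_of_real \<alpha> * D (-1) i (Suc i mod N) = lmul N D Fm 0 i i"
      using N0 iN by (simp add: Fm_def lmul_Fm_right)
    also have "\<dots> = lmul N (A1 t) (L t) 0 i i - lmul N (L t) (A2 t) 0 i i" by (simp add: DFm lsub_def)
    also have "lmul N (A1 t) (L t) 0 i i = aa i * (1 - complex_of_real \<alpha> * b t i)"
      using lmul_at0[OF A1lub Llub] iN
      by (simp add: L_def calL_0 aa_def if_distrib[of "\<lambda>x. _ * x"] sum.delta cong: if_cong)
    also have "lmul N (L t) (A2 t) 0 i i = (1 - complex_of_real \<alpha> * b t i) * ab i"
      using lmul_at0[OF Llub A2lub] iN
      by (simp add: L_def calL_0 ab_def if_distrib[of "\<lambda>x. x * _"] sum.delta cong: if_cong)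
    finally have e: "D 0 i i + complex_of_real \<alpha> * D (-1) i (Suc i mod N) = aa i * (1 - complex_of_real \<alpha> * b t i) - (1 - complex_of_real \<alpha> * b t i) * ab i" .
    have nz: "1 - complex_of_real \<alpha> * b t i \<noteq> 0" using assms(7) iN by blast
    show "ab i = aa i + d i" unfolding d_def vd e using nz al by (simp add: field_simps)
  qed
  have ind: "aa (k mod N) = aa (1 mod N) + (\<Sum>j=1..k-1. d (j mod N))" if "1 \<le> k" for k
    using that
  proof (induction k)
    case 0 then show ?case by simp
  next
    case (Suc k)
    show ?case
    proof (cases "k = 0")
      case True then show ?thesis by simp
    next
      case False
      then obtain k' where k': "k = Suc k'" by (cases k) auto
      have "aa (Suc k mod N) = ab (k mod N)" using shift[of "k mod N"] N0 by (simp add: mod_Suc_eq)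
      also have "\<dots> = aa (k mod N) + d (k mod N)" using lax[of "k mod N"] N0 by simp
      also have "\<dots> = aa (1 mod N) + (\<Sum>j=1..k. d (j mod N))" using Suc.IH False k' by simp
      finally show ?thesis by simp
    qed
  qed
  have part1: "\<forall>k\<in>{1..N}. P0 (A2 t) 0 (k mod N) (k mod N) = P0 (A1 t) 0 (Suc k mod N) (Suc k mod N)"
  proof
    fix k assume "k \<in> {1..N}"
    show "P0 (A2 t) 0 (k mod N) (k mod N) = P0 (A1 t) 0 (Suc k mod N) (Suc k mod N)"
      using shift[of "k mod N"] N0 by (simp add: P0_def aa_def ab_def mod_Suc_eq)
  qed
  have part2: "\<forall>k\<in>{1..N}. P0 (A1 t) 0 (k mod N) (k mod N) = aa (1 mod N) + (\<Sum>j=1..k-1. d (j mod N))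
        \<and> P0 (A2 t) 0 (k mod N) (k mod N) = aa (1 mod N) + (\<Sum>j=1..k. d (j mod N))"
  proof
    fix k assume k: "k \<in> {1..N}"
    then obtain k' where k': "k = Suc k'" by (cases k) auto
    have i1: "aa (k mod N) = aa (1 mod N) + (\<Sum>j=1..k-1. d (j mod N))" using ind k by simp
    have i2: "ab (k mod N) = aa (k mod N) + d (k mod N)" using lax[of "k mod N"] N0 by simp
    show "P0 (A1 t) 0 (k mod N) (k mod N) = aa (1 mod N) + (\<Sum>j=1..k-1. d (j mod N))
        \<and> P0 (A2 t) 0 (k mod N) (k mod N) = aa (1 mod N) + (\<Sum>j=1..k. d (j mod N))"
      using i1 i2 k' by (simp add: P0_def aa_def ab_def)
  qed
  show "(\<forall>k\<in>{1..N}. P0 (A2 t) 0 (k mod N) (k mod N) = P0 (A1 t) 0 (Suc k mod N) (Suc k mod N))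
     \<and> (\<exists>C. \<forall>k\<in>{1..N}.
          P0 (A1 t) 0 (k mod N) (k mod N) = C + (\<Sum>j=1..k-1. complex_of_real \<alpha> * vector_derivative (\<lambda>s. b s (j mod N)) (at t) / (1 - complex_of_real \<alpha> * b t (j mod N)))
        \<and> P0 (A2 t) 0 (k mod N) (k mod N) = C + (\<Sum>j=1..k. complex_of_real \<alpha> * vector_derivative (\<lambda>s. b s (j mod N)) (at t) / (1 - complex_of_real \<alpha> * b t (j mod N))))"
    using part1 part2 unfolding d_def by blast
qed

end
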